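(* Let $B$ be an nbc basis of $M$ with $\mathrm{IA}(B)=\{c_1>\cdots>c_{k+1}\}$, and set $S_B=B-\mathrm{IA}(B)=\{e_1>\cdots>e_{r-k}\}$ and $T_B=(E-B)-\min(E-B)=\{e_{r-k+1}<\cdots<e_{n-k-1}\}$. Then: (1) The largest index $i$ such that $c_i\notin\mathrm{cl}(S_B)\cup\mathrm{cl}^\perp(T_B)$ exists and equals the smallest index $i$ such that $\mathrm{cl}(S_B\cup\{c_1,\dots,c_i\})\cup\mathrm{cl}^\perp(T_B)=E$. (2) With this $i$, the set of $n-1$ pairs $F^+_j|G^+_j$, $1\le j\le n-1$, given by $\mathrm{cl}\{e_1,\dots,e_j\}\,|\,E$ for $1\le j\le r-k$; $\mathrm{cl}(S_B\cup\{c_1,\dots,c_{j-(r-k)}\})\,|\,E$ for $1\le j-(r-k)\le i-1$; $\mathrm{cl}(S_B\cup\{c_1,\dots,c_{j-(r-k)}\})\,|\,\mathrm{cl}^\perp(T_B)$ for $i\le j-(r-k)\le k$; $E\,|\,\mathrm{cl}^\perp\{e_{j-k},\dots,e_{n-k-1}\}$ for $r+1\le j\le n-1$, is a maximal biflag of $M$.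
   Context: Let $M$ be a matroid with no loops and no coloops on the ground set $E=\{0,1,\dots,n\}$, totally ordered by the usual order of integers, of rank $r+1$; its dual $M^\perp$ has rank $n-r$. Write $\mathrm{cl}$, $\mathrm{cl}^\perp$ for the closure operators of $M$, $M^\perp$. A biflat of $M$ is a pair $F|G$ where $F$ is a flat of $M$, $G$ is a flat of $M^\perp$, both are nonempty, they are not both equal to $E$, and $F\cup G=E$. Two biflats $F|G$, $F'|G'$ are compatible if ($F\subseteq F'$ and $G\supseteq G'$) or ($F\supseteq F'$ and $G\subseteq G'$). A biflag is a set of pairwise compatible biflats with $\bigcup_{F|G}(F\cap G)\neq E$; maximal means maximal under inclusion among biflags. For a basis $B$ and $i\in B$, $C^\perp(B,i)$ is the unique cocircuit of $M$ contained in $(E-B)\cup i$ and containing $i$; for $i\notin B$, $C(B,i)$ is the unique circuit contained in $B\cup i$ and containing $i$. $\mathrm{IA}(B)=\{i\in B: i=\min C^\perp(B,i)\}$, $\mathrm{EA}(B)=\{i\notin B: i=\min C(B,i)\}$. $B$ is an nbc basis if $\mathrm{EA}(B)=\emptyset$. *)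

theory Defs
  imports Main
begin

definition matroid :: "'a set \<Rightarrow> ('a set \<Rightarrow> bool) \<Rightarrow> bool" where
  "matroid E indep \<longleftrightarrow> finite E \<and> indep {} \<and>
     (\<forall>X. indep X \<longrightarrow> X \<subseteq> E) \<and>
     (\<forall>X Y. indep X \<and> Y \<subseteq> X \<longrightarrow> indep Y) \<and>
     (\<forall>X Y. indep X \<and> indep Y \<and> card X < card Y \<longrightarrow> (\<exists>y\<in>Y - X. indep (insert y X)))"

definition rk :: "('a set \<Rightarrow> bool) \<Rightarrow> 'a set \<Rightarrow> nat" where
  "rk indep X = Max {card I | I. I \<subseteq> X \<and> indep I}"

definition cl :: "'a set \<Rightarrow> ('a set \<Rightarrow> bool) \<Rightarrow> 'a set \<Rightarrow> 'a set" where
  "cl E indep X = {x \<in> E. rk indep (insert x X) = rk indep X}"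

definition flat :: "'a set \<Rightarrow> ('a set \<Rightarrow> bool) \<Rightarrow> 'a set \<Rightarrow> bool" where
  "flat E indep F \<longleftrightarrow> F \<subseteq> E \<and> cl E indep F = F"

definition basis :: "'a set \<Rightarrow> ('a set \<Rightarrow> bool) \<Rightarrow> 'a set \<Rightarrow> bool" where
  "basis E indep B \<longleftrightarrow> indep B \<and> (\<forall>x\<in>E - B. \<not> indep (insert x B))"

definition dual_indep :: "'a set \<Rightarrow> ('a set \<Rightarrow> bool) \<Rightarrow> 'a set \<Rightarrow> bool" where
  "dual_indep E indep X \<longleftrightarrow> X \<subseteq> E \<and> (\<exists>B. basis E indep B \<and> X \<inter> B = {})"

definition circuit :: "'a set \<Rightarrow> ('a set \<Rightarrow> bool) \<Rightarrow> 'a set \<Rightarrow> bool" where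
  "circuit E indep C \<longleftrightarrow> C \<subseteq> E \<and> \<not> indep C \<and> (\<forall>x\<in>C. indep (C - {x}))"

definition cocircuit :: "'a set \<Rightarrow> ('a set \<Rightarrow> bool) \<Rightarrow> 'a set \<Rightarrow> bool" where
  "cocircuit E indep D \<longleftrightarrow> circuit E (dual_indep E indep) D"

definition dual_cl :: "'a set \<Rightarrow> ('a set \<Rightarrow> bool) \<Rightarrow> 'a set \<Rightarrow> 'a set" where
  "dual_cl E indep X = cl E (dual_indep E indep) X"

definition dual_flat :: "'a set \<Rightarrow> ('a set \<Rightarrow> bool) \<Rightarrow> 'a set \<Rightarrow> bool" where
  "dual_flat E indep G \<longleftrightarrow> flat E (dual_indep E indep) G"

definition loop :: "'a set \<Rightarrow> ('a set \<Rightarrow> bool) \<Rightarrow> 'a \<Rightarrow> bool" where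
  "loop E indep x \<longleftrightarrow> x \<in> E \<and> \<not> indep {x}"

definition coloop :: "'a set \<Rightarrow> ('a set \<Rightarrow> bool) \<Rightarrow> 'a \<Rightarrow> bool" where
  "coloop E indep x \<longleftrightarrow> loop E (dual_indep E indep) x"

definition fund_circuit :: "'a set \<Rightarrow> ('a set \<Rightarrow> bool) \<Rightarrow> 'a set \<Rightarrow> 'a \<Rightarrow> 'a set" where
  "fund_circuit E indep B i = (THE C. circuit E indep C \<and> C \<subseteq> insert i B \<and> i \<in> C)"

definition fund_cocircuit :: "'a set \<Rightarrow> ('a set \<Rightarrow> bool) \<Rightarrow> 'a set \<Rightarrow> 'a \<Rightarrow> 'a set" where
  "fund_cocircuit E indep B i = (THE D. cocircuit E indep D \<and> D \<subseteq> insert i (E - B) \<and> i \<in> D)"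

definition IA :: "'a::linorder set \<Rightarrow> ('a set \<Rightarrow> bool) \<Rightarrow> 'a set \<Rightarrow> 'a set" where
  "IA E indep B = {i \<in> B. i = Min (fund_cocircuit E indep B i)}"

definition EA :: "'a::linorder set \<Rightarrow> ('a set \<Rightarrow> bool) \<Rightarrow> 'a set \<Rightarrow> 'a set" where
  "EA E indep B = {i \<in> E - B. i = Min (fund_circuit E indep B i)}"

definition nbc_basis :: "'a::linorder set \<Rightarrow> ('a set \<Rightarrow> bool) \<Rightarrow> 'a set \<Rightarrow> bool" where
  "nbc_basis E indep B \<longleftrightarrow> basis E indep B \<and> EA E indep B = {}"

text \<open>Biflats, compatibility, biflags. A biflat F|G is represented as the pair (F, G).\<close>
definition biflat :: "'a set \<Rightarrow> ('a set \<Rightarrow> bool) \<Rightarrow> 'a set \<times> 'a set \<Rightarrow> bool" where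
  "biflat E indep FG \<longleftrightarrow> (case FG of (F, G) \<Rightarrow>
     flat E indep F \<and> dual_flat E indep G \<and> F \<noteq> {} \<and> G \<noteq> {} \<and>
     \<not> (F = E \<and> G = E) \<and> F \<union> G = E)"

definition compatible :: "'a set \<times> 'a set \<Rightarrow> 'a set \<times> 'a set \<Rightarrow> bool" where
  "compatible FG FG' \<longleftrightarrow> (case FG of (F, G) \<Rightarrow> case FG' of (F', G') \<Rightarrow>
     (F \<subseteq> F' \<and> G' \<subseteq> G) \<or> (F' \<subseteq> F \<and> G \<subseteq> G'))"

definition biflag :: "'a set \<Rightarrow> ('a set \<Rightarrow> bool) \<Rightarrow> ('a set \<times> 'a set) set \<Rightarrow> bool" where
  "biflag E indep X \<longleftrightarrow> (\<forall>p\<in>X. biflat E indep p) \<and>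
     (\<forall>p\<in>X. \<forall>q\<in>X. compatible p q) \<and> (\<Union>(F, G)\<in>X. F \<inter> G) \<noteq> E"

definition maximal_biflag :: "'a set \<Rightarrow> ('a set \<Rightarrow> bool) \<Rightarrow> ('a set \<times> 'a set) set \<Rightarrow> bool" where
  "maximal_biflag E indep X \<longleftrightarrow> biflag E indep X \<and>
     (\<forall>Y. biflag E indep Y \<and> X \<subseteq> Y \<longrightarrow> Y = X)"

end

theory Submission
  imports Defs
begin


locale matr =
  fixes E :: "'a set" and ind :: "'a set \<Rightarrow> bool"
  assumes mat: "matroid E ind"
begin

lemma finE: "finite E" using mat unfolding matroid_def by blast
lemma ind_empty: "ind {}" using mat unfolding matroid_def by blast
lemma ind_sub: "ind X \<Longrightarrow> X \<subseteq> E" using mat unfolding matroid_def by blast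
lemma ind_mono: "ind X \<Longrightarrow> Y \<subseteq> X \<Longrightarrow> ind Y" using mat unfolding matroid_def by blast
lemma aug: "ind X \<Longrightarrow> ind Y \<Longrightarrow> card X < card Y \<Longrightarrow> \<exists>y\<in>Y-X. ind (insert y X)"
  using mat unfolding matroid_def by blast
lemma ind_fin: "ind X \<Longrightarrow> finite X" using ind_sub finE finite_subset by blast

definition mis where "mis X I \<longleftrightarrow> I \<subseteq> X \<and> ind I \<and> (\<forall>x\<in>X-I. \<not> ind (insert x I))"

lemma mis_ext:
  assumes "ind I" "I \<subseteq> X"
  shows "\<exists>J. I \<subseteq> J \<and> mis X J"
proof -
  let ?S = "{J. I \<subseteq> J \<and> J \<subseteq> X \<and> ind J}"
  have finS: "finite ?S"
    by (rule finite_subset[of _ "Pow E"]) (use ind_sub finE in auto)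
  have "I \<in> ?S" using assms by auto
  define m where "m = Max (card ` ?S)"
  have "m \<in> card ` ?S" unfolding m_def using finS \<open>I \<in> ?S\<close> by (intro Max_in) auto
  then obtain J where J: "J \<in> ?S" "card J = m" by auto
  have "mis X J" unfolding mis_def
  proof (intro conjI ballI)
    show "J \<subseteq> X" "ind J" using J by auto
    fix x assume x: "x \<in> X - J"
    show "\<not> ind (insert x J)"
    proof
      assume h: "ind (insert x J)"
      then have "insert x J \<in> ?S" using J x by auto
      then have "card (insert x J) \<le> m" unfolding m_def using finS by (intro Max_ge) auto
      moreover have "card (insert x J) = Suc (card J)" using x ind_fin[OF h] by auto
      ultimately show False using J by simp
    qed
  qed
  then show ?thesis using J by auto
qed

lemma mis_card:
  assumes "mis X I" shows "card I = rk ind X"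
proof -
  have fin: "finite {card J | J. J \<subseteq> X \<and> ind J}"
    by (rule finite_subset[of _ "card ` Pow E"]) (use ind_sub finE in auto)
  show ?thesis unfolding rk_def
  proof (rule Max_eqI[symmetric, OF fin])
    show "card I \<in> {card J | J. J \<subseteq> X \<and> ind J}" using assms unfolding mis_def by auto
    fix y assume "y \<in> {card J | J. J \<subseteq> X \<and> ind J}"
    then obtain J where J: "J \<subseteq> X" "ind J" "y = card J" by auto
    show "y \<le> card I"
    proof (rule ccontr)
      assume "\<not> y \<le> card I"
      then obtain z where "z \<in> J - I" "ind (insert z I)" using aug[of I J] assms J unfolding mis_def by auto
      then show False using assms J unfolding mis_def by auto
    qed
  qed
qed

lemma ex_mis: "\<exists>I. mis X I" using mis_ext[of "{}" X] ind_empty by auto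

lemma rk_ind: "ind X \<Longrightarrow> rk ind X = card X"
  using mis_card[of X X] unfolding mis_def by auto

lemma mis_cl:
  assumes "mis X I"
  shows "cl E ind X = {x\<in>E. x \<in> I \<or> \<not> ind (insert x I)}"
proof (rule set_eqI)
  fix x
  have I: "I \<subseteq> X" "ind I" using assms unfolding mis_def by auto
  show "x \<in> cl E ind X \<longleftrightarrow> x \<in> {x\<in>E. x \<in> I \<or> \<not> ind (insert x I)}"
  proof (cases "x \<in> E")
    case False then show ?thesis unfolding cl_def by auto
  next
    case True
    show ?thesis
    proof (cases "x \<in> I")
      case True
      then have "insert x X = X" using I by auto
      then show ?thesis using \<open>x \<in> E\<close> True unfolding cl_def by auto
    next
      case xI: False
      show ?thesis
      proof (cases "ind (insert x I)")
        case False
        have "mis (insert x X) I" using assms False unfolding mis_def by auto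
        then have "rk ind (insert x X) = rk ind X" using mis_card assms by metis
        then show ?thesis using \<open>x \<in> E\<close> False unfolding cl_def by auto
      next
        case True
        obtain K where K: "insert x I \<subseteq> K" "mis (insert x X) K"
          using mis_ext[OF True, of "insert x X"] I by auto
        have "finite K" using K ind_fin unfolding mis_def by auto
        then have "card (insert x I) \<le> card K" using K card_mono by blast
        moreover have "card (insert x I) = Suc (card I)" using xI ind_fin[OF I(2)] by auto
        ultimately have "rk ind (insert x X) \<noteq> rk ind X"
          using mis_card[OF K(2)] mis_card[OF assms] by auto
        then show ?thesis using True xI unfolding cl_def by auto
      qed
    qed
  qed
qed

lemma cl_ind: "ind I \<Longrightarrow> cl E ind I = {x\<in>E. x \<in> I \<or> \<not> ind (insert x I)}"
  by (rule mis_cl) (auto simp: mis_def)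

lemma cl_sub: "cl E ind X \<subseteq> E" unfolding cl_def by auto
lemma cl_incr: "X \<subseteq> E \<Longrightarrow> X \<subseteq> cl E ind X" unfolding cl_def by (auto simp: insert_absorb)

lemma mis_cl_mis: assumes "mis X I" "X \<subseteq> E" shows "mis (cl E ind X) I"
  using assms cl_incr[OF assms(2)] unfolding mis_cl[OF assms(1)] by (auto simp: mis_def)

lemma cl_idem: "X \<subseteq> E \<Longrightarrow> cl E ind (cl E ind X) = cl E ind X"
proof -
  assume X: "X \<subseteq> E"
  obtain I where I: "mis X I" using ex_mis by blast
  show ?thesis using mis_cl[OF I] mis_cl[OF mis_cl_mis[OF I X]] by simp
qed

lemma cl_flat: "X \<subseteq> E \<Longrightarrow> flat E ind (cl E ind X)"
  unfolding flat_def using cl_idem cl_sub by auto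

lemma cl_mono: assumes "X \<subseteq> Y" shows "cl E ind X \<subseteq> cl E ind Y"
proof -
  obtain I where I: "mis X I" using ex_mis by blast
  obtain J where J: "I \<subseteq> J" "mis Y J" using mis_ext[of I Y] I assms unfolding mis_def by auto
  have "\<not> ind (insert x J)" if "\<not> ind (insert x I)" for x
    using that J(1) ind_mono[of "insert x J" "insert x I"] by auto
  then show ?thesis unfolding mis_cl[OF I] mis_cl[OF J(2)] using J(1) by auto
qed

lemma rk_cl: "X \<subseteq> E \<Longrightarrow> rk ind (cl E ind X) = rk ind X"
proof -
  assume X: "X \<subseteq> E"
  obtain I where I: "mis X I" using ex_mis by blast
  show ?thesis using mis_card[OF I] mis_card[OF mis_cl_mis[OF I X]] by simp
qed

lemma rk_mono: assumes "X \<subseteq> Y" shows "rk ind X \<le> rk ind Y"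
proof -
  obtain I where I: "mis X I" using ex_mis by blast
  obtain J where J: "I \<subseteq> J" "mis Y J" using mis_ext[of I Y] I assms unfolding mis_def by auto
  have "finite J" using J ind_fin unfolding mis_def by auto
  then show ?thesis using mis_card[OF I] mis_card[OF J(2)] J(1) card_mono by metis
qed

lemma cl_eq_rk: assumes "X \<subseteq> Y" "rk ind X = rk ind Y" shows "cl E ind Y = cl E ind X"
proof -
  obtain I where I: "mis X I" using ex_mis by blast
  obtain J where J: "I \<subseteq> J" "mis Y J" using mis_ext[of I Y] I assms unfolding mis_def by auto
  have "finite J" using J ind_fin unfolding mis_def by auto
  moreover have "card I = card J" using mis_card[OF I] mis_card[OF J(2)] assms by simp
  ultimately have "I = J" using J(1) card_subset_eq by blast
  then show ?thesis using mis_cl[OF I] mis_cl[OF J(2)] by simp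
qed

lemma flat_eq: assumes "flat E ind F" "flat E ind G" "F \<subseteq> G" "rk ind F = rk ind G"
  shows "F = G"
  using cl_eq_rk[OF assms(3,4)] assms(1,2) unfolding flat_def by simp

lemma notin_cl: "ind (insert x X) \<Longrightarrow> x \<notin> X \<Longrightarrow> x \<notin> cl E ind X"
  using cl_ind[of X] ind_mono[of "insert x X" X] by auto

lemma in_cl: "ind X \<Longrightarrow> x \<in> E \<Longrightarrow> \<not> ind (insert x X) \<Longrightarrow> x \<in> cl E ind X"
  using cl_ind[of X] by auto

lemma basis_mis: "basis E ind B \<longleftrightarrow> mis E B"
  unfolding basis_def mis_def using ind_sub by auto

lemma basis_card: "basis E ind B \<Longrightarrow> card B = rk ind E"
  using basis_mis mis_card by auto

lemma basis_ex: "\<exists>B. basis E ind B" using ex_mis basis_mis by auto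

lemma ind_card_le: "ind I \<Longrightarrow> card I \<le> rk ind E"
  using rk_ind rk_mono ind_sub by metis

lemma card_basis: assumes "ind I" "card I = rk ind E" shows "basis E ind I"
  unfolding basis_def
proof (intro conjI ballI assms(1))
  fix x assume x: "x \<in> E - I"
  show "\<not> ind (insert x I)"
  proof
    assume h: "ind (insert x I)"
    have "card (insert x I) = Suc (card I)" using x ind_fin[OF assms(1)] by auto
    then show False using ind_card_le[OF h] assms by simp
  qed
qed

lemma basis_ind: "basis E ind B \<Longrightarrow> ind B" unfolding basis_def by auto

lemma basis_cl: "basis E ind B \<Longrightarrow> cl E ind B = E"
  using cl_ind[of B] cl_sub unfolding basis_def by auto

lemma rk_le_card: "finite X \<Longrightarrow> rk ind X \<le> card X"
  by (metis card_mono ex_mis mis_card mis_def)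

end


context matr begin

lemma dual_matroid: "matroid E (dual_indep E ind)"
  unfolding matroid_def
proof (intro conjI allI impI finE)
  show "dual_indep E ind {}" using basis_ex unfolding dual_indep_def by auto
  show "\<And>X. dual_indep E ind X \<Longrightarrow> X \<subseteq> E" unfolding dual_indep_def by auto
  show "\<And>X Y. dual_indep E ind X \<and> Y \<subseteq> X \<Longrightarrow> dual_indep E ind Y" unfolding dual_indep_def by blast
  fix X Y assume h: "dual_indep E ind X \<and> dual_indep E ind Y \<and> card X < card Y"
  then obtain BX BY where BX: "basis E ind BX" "X \<inter> BX = {}" and BY: "basis E ind BY" "Y \<inter> BY = {}"
    and XE: "X \<subseteq> E" and YE: "Y \<subseteq> E" unfolding dual_indep_def by auto
  have finX: "finite X" "finite Y" using XE YE finE finite_subset by auto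
  show "\<exists>y\<in>Y - X. dual_indep E ind (insert y X)"
  proof (rule ccontr)
    assume nc: "\<not> ?thesis"
    let ?J = "BY - X"
    have indJ: "ind ?J" using ind_mono basis_ind[OF BY(1)] by blast
    obtain J' where J': "?J \<subseteq> J'" "mis (E - X) J'" using mis_ext[OF indJ, of "E - X"]
      using ind_sub[OF indJ] by auto
    have "BX \<subseteq> E - X" using BX ind_sub[OF basis_ind[OF BX(1)]] by auto
    then have "rk ind BX \<le> rk ind (E - X)" by (rule rk_mono)
    then have "card J' \<ge> rk ind E" using mis_card[OF J'(2)] rk_ind[OF basis_ind[OF BX(1)]] basis_card[OF BX(1)] by simp
    moreover have "card J' \<le> rk ind E" using ind_card_le J'(2) unfolding mis_def by auto
    ultimately have cJ': "card J' = rk ind E" by simp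
    have bJ': "basis E ind J'" using card_basis cJ' J'(2) unfolding mis_def by auto
    have J'X: "J' \<inter> X = {}" using J'(2) unfolding mis_def by auto
    have YX: "Y - X \<subseteq> J'"
    proof
      fix y assume y: "y \<in> Y - X"
      show "y \<in> J'"
      proof (rule ccontr)
        assume "y \<notin> J'"
        then have "dual_indep E ind (insert y X)" unfolding dual_indep_def using bJ' J'X y XE YE by auto
        then show False using nc y by auto
      qed
    qed
    have finJ': "finite J'" using ind_fin J'(2) unfolding mis_def by auto
    have "?J \<inter> (Y - X) = {}" using BY by auto
    moreover have "finite ?J" "finite (Y - X)" using finX ind_fin[OF indJ] by auto
    ultimately have "card ?J + card (Y - X) = card (?J \<union> (Y - X))"
      by (simp add: card_Un_disjoint)
    also have "\<dots> \<le> card J'" using J' YX finJ' by (intro card_mono) auto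
    finally have A: "card ?J + card (Y - X) \<le> rk ind E" using cJ' by simp
    have finBY: "finite BY" using ind_fin basis_ind BY by auto
    have "BY \<inter> X \<subseteq> X - Y" using BY by auto
    then have "card (BY \<inter> X) \<le> card (X - Y)" using finX by (intro card_mono) auto
    moreover have "card BY = card ?J + card (BY \<inter> X)" using finBY
      by (metis add.commute card_Int_Diff)
    moreover have "card X = card (X - Y) + card (X \<inter> Y)" "card Y = card (Y - X) + card (X \<inter> Y)"
      using card_Int_Diff[OF finX(1), of Y] card_Int_Diff[OF finX(2), of X]
      by (simp_all add: Int_commute)
    ultimately show False using A h basis_card[OF BY(1)] by linarith
  qed
qed

end

context matr begin
lemma circuit_char:
  assumes B: "basis E ind B" and x: "x \<notin> B" and C: "circuit E ind C" "C \<subseteq> insert x B" "x \<in> C"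
    and y: "y \<in> B"
  shows "y \<in> C \<longleftrightarrow> ind (insert x (B - {y}))"
proof
  assume yC: "y \<in> C"
  have xy: "x \<noteq> y" using x y by auto
  have K: "ind (C - {y})" using C yC unfolding circuit_def by auto
  have xE: "x \<in> E" using C unfolding circuit_def by auto
  obtain J where J: "C - {y} \<subseteq> J" "mis (insert x B) J" using mis_ext[OF K, of "insert x B"] C by auto
  have "rk ind B \<le> rk ind (insert x B)" by (rule rk_mono) auto
  moreover have "rk ind (insert x B) \<le> rk ind E" using xE ind_sub[OF basis_ind[OF B]] by (intro rk_mono) auto
  ultimately have cJ: "card J = card B" using mis_card[OF J(2)] rk_ind[OF basis_ind[OF B]] basis_card[OF B] by simp
  have "y \<notin> J"
  proof
    assume "y \<in> J"
    then have "C \<subseteq> J" using J by auto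
    then show False using C J ind_mono unfolding circuit_def mis_def by auto
  qed
  then have JW: "J \<subseteq> insert x (B - {y})" using J unfolding mis_def by auto
  have finB: "finite B" using ind_fin basis_ind B by auto
  have "card (insert x (B - {y})) = card B" using finB x y
  proof -
    have "card (B - {y}) = card B - 1" using finB y by (simp add: card_Diff_singleton)
    moreover have "card B > 0" using finB y card_gt_0_iff by blast
    ultimately show ?thesis using finB x by simp
  qed
  then have "J = insert x (B - {y})" using JW cJ finB by (intro card_subset_eq) auto
  then show "ind (insert x (B - {y}))" using J unfolding mis_def by auto
next
  assume h: "ind (insert x (B - {y}))"
  show "y \<in> C"
  proof (rule ccontr)
    assume "y \<notin> C"
    then have "C \<subseteq> insert x (B - {y})" using C by auto
    then show False using h C ind_mono unfolding circuit_def by auto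
  qed
qed

lemma fund_unique:
  assumes B: "basis E ind B" and x: "x \<in> E" "x \<notin> B"
  shows "\<exists>!C. circuit E ind C \<and> C \<subseteq> insert x B \<and> x \<in> C"
proof (rule ex_ex1I)
  let ?S = "{C. C \<subseteq> insert x B \<and> \<not> ind C}"
  have "insert x B \<in> ?S" using B x unfolding basis_def by auto
  then obtain C where C: "C \<in> ?S" "\<forall>D\<in>?S. card C \<le> card D"
    using ex_has_least_nat[of "\<lambda>C. C \<in> ?S" "insert x B" card] by auto
  have finB: "finite (insert x B)" using ind_fin basis_ind B by auto
  have circ: "circuit E ind C" unfolding circuit_def
  proof (intro conjI ballI)
    show "C \<subseteq> E" using C x ind_sub[OF basis_ind[OF B]] by auto
    show "\<not> ind C" using C by auto
    fix z assume z: "z \<in> C"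
    show "ind (C - {z})"
    proof (rule ccontr)
      assume "\<not> ind (C - {z})"
      then have "C - {z} \<in> ?S" using C by auto
      then have "card C \<le> card (C - {z})" using C by auto
      moreover have "finite C" using C finB finite_subset by auto
      ultimately show False using z card_Diff1_less[of C z] by simp
    qed
  qed
  have "x \<in> C"
  proof (rule ccontr)
    assume "x \<notin> C"
    then have "C \<subseteq> B" using C by auto
    then show False using C ind_mono basis_ind[OF B] by auto
  qed
  then show "\<exists>C. circuit E ind C \<and> C \<subseteq> insert x B \<and> x \<in> C" using circ C by auto
next
  fix C D assume C: "circuit E ind C \<and> C \<subseteq> insert x B \<and> x \<in> C"
    and D: "circuit E ind D \<and> D \<subseteq> insert x B \<and> x \<in> D"
  show "C = D"
  proof (rule set_eqI)
    fix z
    show "z \<in> C \<longleftrightarrow> z \<in> D"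
      using circuit_char[OF B x(2), of C z] circuit_char[OF B x(2), of D z] C D by auto
  qed
qed

lemma fund_props:
  assumes B: "basis E ind B" and x: "x \<in> E" "x \<notin> B"
  shows "circuit E ind (fund_circuit E ind B x) \<and> fund_circuit E ind B x \<subseteq> insert x B
          \<and> x \<in> fund_circuit E ind B x"
  unfolding fund_circuit_def by (rule theI'[OF fund_unique[OF assms]])

end

lemma (in matr) dual_matr: "matr E (dual_indep E ind)"
  by unfold_locales (rule dual_matroid)



locale mt =
  fixes n r k :: nat and indep :: "nat set \<Rightarrow> bool" and B :: "nat set"
    and c e :: "nat \<Rightarrow> nat"
  assumes M: "matroid {0..n} indep"
    and no_loops: "\<forall>x\<in>{0..n}. \<not> loop {0..n} indep x"
    and no_coloops: "\<forall>x\<in>{0..n}. \<not> coloop {0..n} indep x"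
    and rank: "rk indep {0..n} = r + 1"
    and nbc: "nbc_basis {0..n} indep B"
    and c_img: "IA {0..n} indep B = c ` {1..k+1}"
    and c_dec: "\<forall>a\<in>{1..k+1}. \<forall>b\<in>{1..k+1}. a < b \<longrightarrow> c b < c a"
    and S_img: "B - IA {0..n} indep B = e ` {1..r-k}"
    and S_dec: "\<forall>a\<in>{1..r-k}. \<forall>b\<in>{1..r-k}. a < b \<longrightarrow> e b < e a"
    and T_img: "({0..n} - B) - {Min ({0..n} - B)} = e ` {r-k+1..n-k-1}"
    and T_inc: "\<forall>a\<in>{r-k+1..n-k-1}. \<forall>b\<in>{r-k+1..n-k-1}. a < b \<longrightarrow> e a < e b"
begin

abbreviation "E \<equiv> {0..n}"
abbreviation "clM \<equiv> cl E indep"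
abbreviation "clD \<equiv> cl E (dual_indep E indep)"
abbreviation "dind \<equiv> dual_indep E indep"
definition "m = Min (E - B)"
definition "S = B - IA E indep B"
definition "T = (E - B) - {m}"
definition "C = fund_circuit E indep B m"
definition "a = Min C"

lemma Mm: "matr E indep" by unfold_locales (rule M)
lemma Dm: "matr E dind" using matr.dual_matr[OF Mm] .

lemma Bbasis: "basis E indep B" using nbc unfolding nbc_basis_def by auto
lemma indB: "indep B" using Bbasis unfolding basis_def by auto
lemma BE: "B \<subseteq> E" using matr.ind_sub[OF Mm indB] .
lemma cardB: "card B = r + 1" using matr.basis_card[OF Mm Bbasis] rank by simp
lemma finB: "finite B" using BE finite_subset by blast

lemma ind_single: "x \<in> E \<Longrightarrow> indep {x}" using no_loops unfolding loop_def by auto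
lemma dind_single: "x \<in> E \<Longrightarrow> dind {x}" using no_coloops unfolding coloop_def loop_def by auto

lemma EB_ne: "E - B \<noteq> {}"
proof
  assume h: "E - B = {}"
  have "0 \<in> E" by simp
  then obtain B' where B': "basis E indep B'" "{0} \<inter> B' = {}" using dind_single[of 0]
    unfolding dual_indep_def by auto
  have "B' \<subseteq> E" using matr.ind_sub[OF Mm] B' unfolding basis_def by auto
  moreover have "card B' = card E" using matr.basis_card[OF Mm B'(1)] matr.basis_card[OF Mm Bbasis] h BE
    by (metis Diff_eq_empty_iff subset_antisym)
  ultimately have "B' = E" by (simp add: card_subset_eq)
  then show False using B' by auto
qed

lemma m_in: "m \<in> E - B" unfolding m_def using EB_ne by (intro Min_in) auto
lemma m_le: "x \<in> E - B \<Longrightarrow> m \<le> x" unfolding m_def by (intro Min_le) auto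

lemma cardEB: "card (E - B) = n - r" using card_Diff_subset[OF finB BE] cardB by simp
lemma rn: "r + 1 \<le> n"
proof -
  have "card (E - B) > 0" using EB_ne by (simp add: card_gt_0_iff)
  then show ?thesis using cardEB by simp
qed

lemma EB_split: "E - B = insert m T" using m_in unfolding T_def by auto
lemma mT: "m \<notin> T" unfolding T_def by auto
lemma TE: "T \<subseteq> E" unfolding T_def by auto
lemma TB: "T \<inter> B = {}" unfolding T_def by auto
lemma cardT: "card T = n - r - 1" unfolding T_def using cardEB m_in by (simp add: card_Diff_singleton)

lemma dbasis: "basis E dind (E - B)"
  unfolding basis_def
proof (intro conjI ballI)
  show "dind (E - B)" unfolding dual_indep_def using Bbasis by auto
  fix x assume x: "x \<in> E - (E - B)"
  show "\<not> dind (insert x (E - B))"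
  proof
    assume "dind (insert x (E - B))"
    then obtain B' where B': "basis E indep B'" "insert x (E - B) \<inter> B' = {}" unfolding dual_indep_def by auto
    have "B' \<subseteq> E" using matr.ind_sub[OF Mm] B' unfolding basis_def by auto
    then have "B' \<subseteq> B" using B' by auto
    moreover have "card B' = card B" using matr.basis_card[OF Mm B'(1)] matr.basis_card[OF Mm Bbasis] by simp
    ultimately have "B' = B" using finB by (simp add: card_subset_eq)
    then show False using B' x by auto
  qed
qed

lemma Cprops: "circuit E indep C" "C \<subseteq> insert m B" "m \<in> C"
  using matr.fund_props[OF Mm Bbasis, of m] m_in unfolding C_def by auto

lemma finC: "finite C" using Cprops finB finite_subset by blast
lemma a_in: "a \<in> C" unfolding a_def using finC Cprops(3) by (intro Min_in) auto
lemma a_le: "x \<in> C \<Longrightarrow> a \<le> x" unfolding a_def using finC by (intro Min_le) auto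

lemma a_ne_m: "a \<noteq> m"
proof
  assume h: "a = m"
  have "m \<in> EA E indep B" unfolding EA_def using m_in h unfolding a_def C_def by auto
  then show False using nbc unfolding nbc_basis_def by auto
qed

lemma aB: "a \<in> B" using a_in a_ne_m Cprops by auto
lemma a_lt_m: "a < m" using a_le[OF Cprops(3)] a_ne_m by simp

lemma a_IA: "a \<in> IA E indep B"
proof -
  have aE: "a \<in> E" "a \<notin> E - B" using aB BE by auto
  have P: "circuit E dind (fund_circuit E dind (E - B) a) \<and> fund_circuit E dind (E - B) a \<subseteq> insert a (E - B)
          \<and> a \<in> fund_circuit E dind (E - B) a"
    using matr.fund_props[OF Dm dbasis aE] .
  have eq: "fund_cocircuit E indep B a = fund_circuit E dind (E - B) a"
    unfolding fund_cocircuit_def fund_circuit_def cocircuit_def ..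
  let ?D = "fund_cocircuit E indep B a"
  have finD: "finite ?D" using P eq finite_subset[of _ E] by (metis circuit_def finite_atLeastAtMost)
  have "Min ?D = a"
  proof (rule Min_eqI[OF finD])
    show "a \<in> ?D" using P eq by simp
    fix y assume "y \<in> ?D"
    then have "y = a \<or> y \<in> E - B" using P eq by auto
    then show "a \<le> y" using m_le a_lt_m by force
  qed
  then show ?thesis unfolding IA_def using aB by auto
qed

lemma c_inj: "inj_on c {1..k+1}"
  unfolding inj_on_def by (metis c_dec linorder_neqE_nat less_irrefl)
lemma c_mono: "x \<in> {1..k+1} \<Longrightarrow> y \<in> {1..k+1} \<Longrightarrow> c y \<le> c x \<Longrightarrow> x \<le> y"
  using c_dec by (metis leD le_less_linear)

lemma IA_B: "IA E indep B \<subseteq> B" unfolding IA_def by auto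
lemma cB: "x \<in> {1..k+1} \<Longrightarrow> c x \<in> B" using c_img IA_B by auto
lemma cardIA: "card (IA E indep B) = k + 1" using c_img card_image[OF c_inj] by simp
lemma kr: "k \<le> r" using card_mono[OF finB IA_B] cardIA cardB by simp
lemma S_B: "S = B - c ` {1..k+1}" unfolding S_def c_img ..
lemma cS: "x \<in> {1..k+1} \<Longrightarrow> c x \<notin> S" unfolding S_B by auto
lemma S_e: "S = e ` {1..r-k}" using S_img unfolding S_def .
lemma T_e: "T = e ` {r-k+1..n-k-1}" using T_img unfolding T_def m_def .
lemma SB: "S \<subseteq> B" unfolding S_def by auto


definition "i0 = (THE i. i \<in> {1..k+1} \<and> c i = a)"
lemma i0: "i0 \<in> {1..k+1}" "c i0 = a"
proof -
  obtain i where i: "i \<in> {1..k+1}" "c i = a" using a_IA c_img by auto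
  have "i0 = i" unfolding i0_def
  proof (rule the_equality)
    show "i \<in> {1..k+1} \<and> c i = a" using i by simp
    fix x assume "x \<in> {1..k+1} \<and> c x = a"
    then show "x = i" using i inj_onD[OF c_inj, of x i] by simp
  qed
  then show "i0 \<in> {1..k+1}" "c i0 = a" using i by simp_all
qed

lemma notin_clD: assumes x: "x \<in> B" "x \<in> C" shows "x \<notin> clD T"
proof -
  have xm: "x \<noteq> m" using x m_in by auto
  have "indep (insert m (B - {x}))"
    using matr.circuit_char[OF Mm Bbasis, of m C x] m_in Cprops x by auto
  moreover have "card (insert m (B - {x})) = r + 1" using x m_in finB cardB
    by (simp add: card_Diff_singleton)
  ultimately have bas: "basis E indep (insert m (B - {x}))" using matr.card_basis[OF Mm] rank by simp
  have "dind (insert x T)" unfolding dual_indep_def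
    using bas TE BE x TB mT xm by auto
  moreover have "x \<notin> T" using x TB by auto
  ultimately show ?thesis using matr.notin_cl[OF Dm] by blast
qed

lemma in_clD: assumes x: "x \<in> B" "x \<notin> C" shows "x \<in> clD T"
proof -
  have dT: "dind T" unfolding dual_indep_def using Bbasis TE TB by auto
  have "\<not> dind (insert x T)"
  proof
    assume "dind (insert x T)"
    then obtain B' where B': "basis E indep B'" "insert x T \<inter> B' = {}" unfolding dual_indep_def by auto
    have "B' \<subseteq> E" using matr.ind_sub[OF Mm] B' unfolding basis_def by auto
    then have sub: "B' \<subseteq> insert m (B - {x})" using B' EB_split by auto
    have "card B' = r + 1" using matr.basis_card[OF Mm B'(1)] rank by simp
    moreover have "card (insert m (B - {x})) = r + 1" using x m_in finB cardB
      by (simp add: card_Diff_singleton)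
    ultimately have "B' = insert m (B - {x})" using sub finB by (intro card_subset_eq) auto
    then have "C \<subseteq> B'" using Cprops x by auto
    then show False using Cprops B' matr.ind_mono[OF Mm] unfolding circuit_def basis_def by blast
  qed
  then show ?thesis using matr.in_cl[OF Dm dT] x BE by auto
qed

lemma CD: assumes y: "y \<in> E" shows "y \<in> clD T \<longleftrightarrow> y \<notin> C"
proof -
  have cases: "y \<in> B \<or> y = m \<or> y \<in> T" using y EB_split by blast
  have mn: "m \<notin> clD T"
  proof -
    have "dind (insert m T)" using EB_split dbasis unfolding basis_def by simp
    then show ?thesis using matr.notin_cl[OF Dm, of m T] mT by simp
  qed
  have TT: "T \<subseteq> clD T" using matr.cl_incr[OF Dm TE] .
  have TC: "T \<inter> C = {}" using Cprops(2) TB mT by blast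
  show ?thesis
  proof (cases "y \<in> B")
    case True
    then show ?thesis using notin_clD[of y] in_clD[of y] by blast
  next
    case False
    then have "y = m \<or> y \<in> T" using cases by simp
    then show ?thesis
    proof
      assume "y = m" then show ?thesis using mn Cprops(3) by simp
    next
      assume "y \<in> T" then show ?thesis using TT TC by blast
    qed
  qed
qed

lemma c_notin_clS: "x \<in> {1..k+1} \<Longrightarrow> Y \<subseteq> B \<Longrightarrow> c x \<notin> Y \<Longrightarrow> c x \<notin> clM Y"
  using matr.notin_cl[OF Mm, of "c x" Y] matr.ind_mono[OF Mm indB] cB by auto

lemma part1_a: "j \<in> {1..k+1} \<Longrightarrow> c j \<notin> clM S \<union> clD T \<longleftrightarrow> c j \<in> C"
proof -
  assume j: "j \<in> {1..k+1}"
  have "c j \<notin> clM S" using c_notin_clS[OF j SB cS[OF j]] .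
  moreover have "c j \<in> E" using cB[OF j] BE by blast
  ultimately show ?thesis using CD[of "c j"] by blast
qed

lemma cC_le: "j \<in> {1..k+1} \<Longrightarrow> c j \<in> C \<Longrightarrow> j \<le> i0"
  using a_le i0 c_mono by metis

lemma part1_b: "clM (S \<union> c ` {1..i0}) \<union> clD T = E"
proof -
  let ?X = "S \<union> c ` {1..i0}"
  have XB: "?X \<subseteq> B" using SB cB i0 by auto
  have CmX: "C - {m} \<subseteq> ?X"
  proof
    fix y assume y: "y \<in> C - {m}"
    then have yB: "y \<in> B" using Cprops by auto
    show "y \<in> ?X"
    proof (cases "y \<in> S")
      case False
      then obtain j where "j \<in> {1..k+1}" "y = c j" using yB S_B by auto
      then show ?thesis using cC_le y by auto
    qed auto
  qed
  have "C - {m} \<subseteq> clM ?X" using CmX matr.cl_incr[OF Mm] XB BE by blast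
  moreover have "m \<in> clM (C - {m})"
  proof -
    have "indep (C - {m})" using Cprops unfolding circuit_def by auto
    moreover have "\<not> indep (insert m (C - {m}))" using Cprops unfolding circuit_def
      by (simp add: insert_absorb)
    ultimately show ?thesis using matr.in_cl[OF Mm] m_in by blast
  qed
  then have "m \<in> clM ?X" using matr.cl_mono[OF Mm CmX] by auto
  ultimately have "C \<subseteq> clM ?X" by auto
  then show ?thesis using CD matr.cl_sub[OF Mm] matr.cl_sub[OF Dm] by blast
qed

lemma ai0_notin: "j < i0 \<Longrightarrow> a \<notin> clM (S \<union> c ` {1..j})"
proof -
  assume j: "j < i0"
  have "a \<notin> c ` {1..j}"
  proof
    assume "a \<in> c ` {1..j}"
    then obtain x where x: "x \<in> {1..j}" "c x = a" by auto
    then have "x = i0" using i0 j inj_onD[OF c_inj, of x i0] by simp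
    then show False using x j by simp
  qed
  moreover have "a \<notin> S" using cS[OF i0(1)] i0(2) by simp
  ultimately have "a \<notin> S \<union> c ` {1..j}" by blast
  moreover have "S \<union> c ` {1..j} \<subseteq> B" using SB cB i0 j by auto
  ultimately show ?thesis using c_notin_clS[OF i0(1), of "S \<union> c ` {1..j}"] i0(2) by simp
qed

lemma part1_c: "j < i0 \<Longrightarrow> clM (S \<union> c ` {1..j}) \<union> clD T \<noteq> E"
  using ai0_notin CD a_in aB BE by blast

lemma part1: "c i0 \<notin> clM S \<union> clD T \<and>
          (\<forall>j\<in>{1..k+1}. c j \<notin> clM S \<union> clD T \<longrightarrow> j \<le> i0) \<and>
          clM (S \<union> c ` {1..i0}) \<union> clD T = E \<and>
          (\<forall>j\<in>{1..<i0}. clM (S \<union> c ` {1..j}) \<union> clD T \<noteq> E)"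
  using part1_a[OF i0(1)] i0 a_in part1_a cC_le part1_b part1_c by auto

lemma e_inj1: "inj_on e {1..r-k}"
  unfolding inj_on_def by (metis S_dec linorder_neqE_nat less_irrefl)
lemma e_inj2: "inj_on e {r-k+1..n-k-1}"
  unfolding inj_on_def by (metis T_inc linorder_neqE_nat less_irrefl)

definition "bs x = (if x \<le> r - k then e x else c (x - (r - k)))"
definition "Xs x = bs ` {1..x}"
definition "Fs x = clM (Xs x)"
definition "hs y = (if y \<le> n - r - 1 then e (n - k - y) else m)"
definition "Ys y = hs ` {1..y}"
definition "Gs y = clD (Ys y)"

lemma img_shift: "(\<lambda>t. t - d) ` {d+1..x} = {1..x-d::nat}"
proof (rule set_eqI, rule iffI)
  fix z assume "z \<in> (\<lambda>t. t - d) ` {d+1..x}" then show "z \<in> {1..x-d}" by auto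
next
  fix z assume z: "z \<in> {1..x-d}"
  then have "z + d \<in> {d+1..x}" "z = (z + d) - d" by auto
  then show "z \<in> (\<lambda>t. t - d) ` {d+1..x}" by (rule image_eqI[rotated])
qed

lemma img_rev: "0 < N \<Longrightarrow> y \<le> N \<Longrightarrow> (\<lambda>t. N - t) ` {1..y} = {N-y..N-1::nat}"
proof (rule set_eqI, rule iffI)
  fix z assume "0 < N" "y \<le> N" "z \<in> (\<lambda>t. N - t) ` {1..y}" then show "z \<in> {N-y..N-1}" by auto
next
  fix z assume N: "0 < N" and y: "y \<le> N" and z: "z \<in> {N-y..N-1}"
  then have "N - z \<in> {1..y}" "z = N - (N - z)" by auto
  then show "z \<in> (\<lambda>t. N - t) ` {1..y}" by (rule image_eqI[rotated])
qed

lemma Xs_le: "x \<le> r - k \<Longrightarrow> Xs x = e ` {1..x}"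
  unfolding Xs_def bs_def by (intro image_cong) auto

lemma Xs_ge: assumes "r - k \<le> x" shows "Xs x = S \<union> c ` {1..x - (r - k)}"
proof -
  have "{1..x} = {1..r-k} \<union> {r-k+1..x}" using assms by auto
  then have "Xs x = bs ` {1..r-k} \<union> bs ` {r-k+1..x}" unfolding Xs_def by auto
  moreover have "bs ` {1..r-k} = S" unfolding S_e bs_def by (intro image_cong) auto
  moreover have "bs ` {r-k+1..x} = c ` ((\<lambda>t. t - (r-k)) ` {r-k+1..x})"
    unfolding bs_def image_image by (intro image_cong) auto
  ultimately show ?thesis using img_shift[of "r-k" x] by simp
qed

lemma Xs_B: "x \<le> r + 1 \<Longrightarrow> Xs x \<subseteq> B"
proof -
  assume x: "x \<le> r + 1"
  show ?thesis
  proof (cases "x \<le> r - k")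
    case True
    then have "e ` {1..x} \<subseteq> S" unfolding S_e by auto
    then show ?thesis using Xs_le[OF True] SB by auto
  next
    case False
    then have "c ` {1..x - (r - k)} \<subseteq> B" using cB x kr by auto
    then show ?thesis using Xs_ge False SB by auto
  qed
qed

lemma Xs_top: "Xs (r + 1) = B"
  using Xs_ge[of "r+1"] kr S_B IA_B c_img by auto

lemma Xs_mono: "x \<le> x' \<Longrightarrow> Xs x \<subseteq> Xs x'" unfolding Xs_def by auto

lemma bs_inj: "inj_on bs {1..r+1}"
proof (rule inj_onI)
  fix t u assume t: "t \<in> {1..r+1}" and u: "u \<in> {1..r+1}" and eq: "bs t = bs u"
  have eS: "v \<in> {1..r-k} \<Longrightarrow> e v \<in> S" for v unfolding S_e by auto
  show "t = u"
  proof (cases "t \<le> r - k")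
    case tl: True
    show ?thesis
    proof (cases "u \<le> r - k")
      case True then show ?thesis using tl t u eq inj_onD[OF e_inj1, of t u] unfolding bs_def by auto
    next
      case False
      then have "u - (r-k) \<in> {1..k+1}" using u kr by auto
      then have "c (u - (r-k)) \<notin> S" using cS[of "u - (r-k)"] by auto
      then show ?thesis using tl False eq eS[of t] t unfolding bs_def by auto
    qed
  next
    case tl: False
    show ?thesis
    proof (cases "u \<le> r - k")
      case True
      have "t - (r-k) \<in> {1..k+1}" using t tl kr by auto
      then have "c (t - (r-k)) \<notin> S" using cS[of "t - (r-k)"] by auto
      then show ?thesis using tl True eq eS[of u] u unfolding bs_def by auto
    next
      case False
      have "t - (r-k) \<in> {1..k+1}" "u - (r-k) \<in> {1..k+1}" using t u tl False kr by auto
      moreover have "c (t - (r-k)) = c (u - (r-k))" using eq tl False unfolding bs_def by auto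
      ultimately have "t - (r-k) = u - (r-k)" using inj_onD[OF c_inj] by blast
      then show ?thesis using tl False by auto
    qed
  qed
qed

lemma Xs_card: "x \<le> r + 1 \<Longrightarrow> card (Xs x) = x"
  unfolding Xs_def using card_image[OF inj_on_subset[OF bs_inj, of "{1..x}"]] by auto

lemma Xs_ind: "x \<le> r + 1 \<Longrightarrow> indep (Xs x)" using Xs_B matr.ind_mono[OF Mm indB] by blast
lemma Xs_E: "x \<le> r + 1 \<Longrightarrow> Xs x \<subseteq> E" using Xs_B BE by blast

lemma Fs_rk: "x \<le> r + 1 \<Longrightarrow> rk indep (Fs x) = x"
  unfolding Fs_def using matr.rk_cl[OF Mm Xs_E] matr.rk_ind[OF Mm Xs_ind] Xs_card by simp
lemma Fs_mono: "x \<le> x' \<Longrightarrow> x' \<le> r + 1 \<Longrightarrow> Fs x \<subseteq> Fs x'"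
  unfolding Fs_def using matr.cl_mono[OF Mm Xs_mono] by blast
lemma Fs_top: "Fs (r + 1) = E" unfolding Fs_def Xs_top using matr.basis_cl[OF Mm Bbasis] .
lemma Fs_flat: "x \<le> r + 1 \<Longrightarrow> flat E indep (Fs x)" unfolding Fs_def using matr.cl_flat[OF Mm Xs_E] .
lemma Fs_ne: "1 \<le> x \<Longrightarrow> x \<le> r + 1 \<Longrightarrow> Fs x \<noteq> {}"
  unfolding Fs_def using matr.cl_incr[OF Mm Xs_E, of x] unfolding Xs_def by auto
lemma Fs_ord: "x \<le> r + 1 \<Longrightarrow> x' \<le> r + 1 \<Longrightarrow> Fs x \<subseteq> Fs x' \<Longrightarrow> x \<le> x'"
  using matr.rk_mono[OF Mm, of "Fs x" "Fs x'"] Fs_rk by simp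
lemma Fs_neE: "x \<le> r \<Longrightarrow> Fs x \<noteq> E"
  using Fs_rk[of x] rank by auto
lemma Fs_ge: "r - k \<le> x \<Longrightarrow> Fs x = clM (S \<union> c ` {1..x - (r - k)})" unfolding Fs_def using Xs_ge by simp
lemma Fs_le: "x \<le> r - k \<Longrightarrow> Fs x = clM (e ` {1..x})" unfolding Fs_def using Xs_le by simp

lemma Ys_le: assumes "y \<le> n - r - 1" shows "Ys y = e ` {n-k-y..n-k-1}"
proof -
  have "Ys y = e ` ((\<lambda>t. n - k - t) ` {1..y})" unfolding Ys_def hs_def image_image
    using assms by (intro image_cong) auto
  then show ?thesis using img_rev[of "n-k" y] assms kr rn by simp
qed

lemma Ys_T: "Ys (n - r - 1) = T"
  using Ys_le[of "n-r-1"] T_e kr rn by (simp add: Suc_diff_le)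

lemma Ys_top: "Ys (n - r) = E - B"
proof -
  have "{1..n-r} = insert (n-r) {1..n-r-1}" using rn by auto
  then have "Ys (n - r) = insert (hs (n-r)) (Ys (n-r-1))" unfolding Ys_def by auto
  also have "hs (n - r) = m" unfolding hs_def using rn by auto
  finally show ?thesis using Ys_T EB_split by simp
qed

lemma Ys_mono: "y \<le> y' \<Longrightarrow> Ys y \<subseteq> Ys y'" unfolding Ys_def by auto
lemma Ys_EB: "y \<le> n - r \<Longrightarrow> Ys y \<subseteq> E - B" using Ys_mono Ys_top by blast

lemma hs_inj: "inj_on hs {1..n-r}"
proof -
  have "card (hs ` {1..n-r}) = n - r" using Ys_top cardEB unfolding Ys_def by simp
  then show ?thesis using eq_card_imp_inj_on by (metis card_atLeastAtMost diff_Suc_1 eq_card_imp_inj_on finite_atLeastAtMost)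
qed

lemma Ys_card: "y \<le> n - r \<Longrightarrow> card (Ys y) = y"
  unfolding Ys_def using card_image[OF inj_on_subset[OF hs_inj, of "{1..y}"]] by auto

lemma dindEB: "dind (E - B)" using dbasis unfolding basis_def by simp
lemma Ys_ind: "y \<le> n - r \<Longrightarrow> dind (Ys y)" using Ys_EB matr.ind_mono[OF Dm dindEB] by blast
lemma Ys_E: "y \<le> n - r \<Longrightarrow> Ys y \<subseteq> E" using Ys_EB by blast

lemma Gs_rk: "y \<le> n - r \<Longrightarrow> rk dind (Gs y) = y"
  unfolding Gs_def using matr.rk_cl[OF Dm Ys_E] matr.rk_ind[OF Dm Ys_ind] Ys_card by simp
lemma Gs_mono: "y \<le> y' \<Longrightarrow> y' \<le> n - r \<Longrightarrow> Gs y \<subseteq> Gs y'"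
  unfolding Gs_def using matr.cl_mono[OF Dm Ys_mono] by blast
lemma Gs_top: "Gs (n - r) = E" unfolding Gs_def Ys_top using matr.basis_cl[OF Dm dbasis] .
lemma Gs_T: "Gs (n - r - 1) = clD T" unfolding Gs_def Ys_T ..
lemma Gs_flat: "y \<le> n - r \<Longrightarrow> dual_flat E indep (Gs y)"
  unfolding Gs_def dual_flat_def using matr.cl_flat[OF Dm Ys_E] .
lemma Gs_ne: "1 \<le> y \<Longrightarrow> y \<le> n - r \<Longrightarrow> Gs y \<noteq> {}"
  unfolding Gs_def using matr.cl_incr[OF Dm Ys_E, of y] unfolding Ys_def by auto
lemma Gs_ord: "y \<le> n - r \<Longrightarrow> y' \<le> n - r \<Longrightarrow> Gs y \<subseteq> Gs y' \<Longrightarrow> y \<le> y'"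
  using matr.rk_mono[OF Dm, of "Gs y" "Gs y'"] Gs_rk by simp
lemma dual_rkE: "rk dind E = n - r" using Gs_rk[of "n-r"] Gs_top by simp
lemma Gs_neE: "y < n - r \<Longrightarrow> Gs y \<noteq> E"
  using Gs_rk[of y] dual_rkE by auto
lemma Gs_le: "y \<le> n - r - 1 \<Longrightarrow> Gs y = clD (e ` {n-k-y..n-k-1})" unfolding Gs_def using Ys_le by simp

definition "j0 = r - k + i0"
definition "al j = (if j \<le> r then j else r + 1)"
definition "be j = (if j < j0 then n - r else if j \<le> r + 1 then n - r - 1 else n - j)"
definition "P j = (Fs (al j), Gs (be j))"
definition "FGs j = (if j \<le> r - k then (clM (e ` {1..j}), E)
                 else if j - (r - k) \<le> i0 - 1 then (clM (S \<union> c ` {1..j - (r - k)}), E)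
                 else if j \<le> r then (clM (S \<union> c ` {1..j - (r - k)}), clD T)
                 else (E, clD (e ` {j - k..n - k - 1})))"

lemma j0_bounds: "r - k + 1 \<le> j0" "j0 \<le> r + 1" using i0(1) kr unfolding j0_def by auto

lemma FG_eq: assumes j: "j \<in> {1..n-1}" shows "FGs j = P j"
proof -
  have jn: "j \<le> n - 1" "1 \<le> j" using j by auto
  show ?thesis
  proof (cases "j \<le> r - k")
    case True
    then show ?thesis unfolding FGs_def P_def al_def be_def
      using Fs_le[OF True] Gs_top j0_bounds kr by auto
  next
    case A: False
    show ?thesis
    proof (cases "j - (r - k) \<le> i0 - 1")
      case True
      then have "j < j0" "j \<le> r" using A i0(1) j0_bounds unfolding j0_def by auto
      then show ?thesis unfolding FGs_def P_def al_def be_def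
        using A True Fs_ge[of j] Gs_top by auto
    next
      case B: False
      show ?thesis
      proof (cases "j \<le> r")
        case True
        then have "j0 \<le> j" using A B i0(1) unfolding j0_def by auto
        then show ?thesis unfolding FGs_def P_def al_def be_def
          using A B True Fs_ge[of j] Gs_T by auto
      next
        case False
        have "j0 \<le> j" using False j0_bounds by auto
        moreover have "n - j \<le> n - r - 1" "n - k - (n - j) = j - k" using False jn kr by auto
        moreover have "(if j \<le> r + 1 then n - r - 1 else n - j) = n - j" using False by auto
        ultimately show ?thesis unfolding FGs_def P_def al_def be_def
          using A B False Fs_top Gs_le[of "n - j"] by auto
      qed
    qed
  qed
qed

lemma T_ne: assumes "i0 \<le> k" shows "1 \<le> n - r - 1"
proof (rule ccontr)
  assume "\<not> 1 \<le> n - r - 1"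
  then have T0: "T = {}" using cardT finite_subset[OF TE] by auto
  have k1: "k + 1 \<in> {1..k+1}" by auto
  have "c (k+1) \<notin> C" using cC_le[OF k1] assms by auto
  moreover have cE: "c (k+1) \<in> E" using cB[OF k1] BE by auto
  ultimately have "c (k+1) \<in> clD {}" using CD T0 by auto
  then have "\<not> dind {c (k+1)}" using matr.cl_ind[OF Dm matr.ind_empty[OF Dm]] by auto
  then show False using dind_single[OF cE] by simp
qed

lemma al_range: "j \<in> {1..n-1} \<Longrightarrow> 1 \<le> al j \<and> al j \<le> r + 1" unfolding al_def by auto
lemma be_range: "j \<in> {1..n-1} \<Longrightarrow> 1 \<le> be j \<and> be j \<le> n - r"
proof -
  assume j: "j \<in> {1..n-1}"
  have "j0 \<le> j \<Longrightarrow> j \<le> r + 1 \<Longrightarrow> 1 \<le> n - r - 1"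
  proof -
    assume h: "j0 \<le> j" "j \<le> r + 1"
    show ?thesis
    proof (cases "j = r + 1")
      case True then show ?thesis using j by auto
    next
      case False then have "i0 \<le> k" using h unfolding j0_def using kr by auto
      then show ?thesis by (rule T_ne)
    qed
  qed
  then show ?thesis unfolding be_def using rn j by auto
qed
lemma al_mono: "j \<le> j' \<Longrightarrow> al j \<le> al j'" unfolding al_def by auto
lemma be_mono: "j \<le> j' \<Longrightarrow> be j' \<le> be j" unfolding be_def by auto

lemma Fs_inj: "x \<le> r + 1 \<Longrightarrow> x' \<le> r + 1 \<Longrightarrow> Fs x = Fs x' \<Longrightarrow> x = x'"
  using Fs_ord[of x x'] Fs_ord[of x' x] by auto
lemma Gs_inj: "y \<le> n - r \<Longrightarrow> y' \<le> n - r \<Longrightarrow> Gs y = Gs y' \<Longrightarrow> y = y'"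
  using Gs_ord[of y y'] Gs_ord[of y' y] by auto

lemma P_inj: "inj_on P {1..n-1}"
proof (rule inj_onI)
  fix j j' assume j: "j \<in> {1..n-1}" and j': "j' \<in> {1..n-1}" and eq: "P j = P j'"
  have "al j = al j'" using Fs_inj al_range[OF j] al_range[OF j'] eq unfolding P_def by auto
  moreover have "be j = be j'" using Gs_inj be_range[OF j] be_range[OF j'] eq unfolding P_def by auto
  ultimately show "j = j'" unfolding al_def be_def using j0_bounds j j' by (auto split: if_splits)
qed

lemma P_biflat: assumes j: "j \<in> {1..n-1}" shows "biflat E indep (P j)"
proof -
  note ar = al_range[OF j] and br = be_range[OF j]
  have un: "Fs (al j) \<union> Gs (be j) = E"
  proof (cases "be j = n - r")
    case True then show ?thesis using Gs_top matr.cl_sub[OF Mm] unfolding Fs_def by auto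
  next
    case b: False
    show ?thesis
    proof (cases "al j = r + 1")
      case True then show ?thesis using Fs_top matr.cl_sub[OF Dm] unfolding Gs_def by auto
    next
      case False
      then have jr: "j \<le> r" "al j = j" unfolding al_def by (auto split: if_splits)
      have "j0 \<le> j" using b unfolding be_def by (auto split: if_splits)
      then have "be j = n - r - 1" using jr unfolding be_def by auto
      have "Fs j0 \<subseteq> Fs j" using Fs_mono \<open>j0 \<le> j\<close> jr by auto
      moreover have "Fs j0 = clM (S \<union> c ` {1..i0})" using Fs_ge[of j0] j0_bounds unfolding j0_def by simp
      ultimately have "clM (S \<union> c ` {1..i0}) \<union> clD T \<subseteq> Fs (al j) \<union> Gs (be j)"
        using jr \<open>be j = n - r - 1\<close> Gs_T by auto
      moreover have "Fs (al j) \<union> Gs (be j) \<subseteq> E" using matr.cl_sub[OF Mm] matr.cl_sub[OF Dm]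
        unfolding Fs_def Gs_def by auto
      ultimately show ?thesis using part1_b by auto
    qed
  qed
  have nb: "\<not> (Fs (al j) = E \<and> Gs (be j) = E)"
  proof
    assume h: "Fs (al j) = E \<and> Gs (be j) = E"
    then have "al j = r + 1" using Fs_neE ar by (metis le_Suc_eq Suc_eq_plus1)
    then have "r + 1 \<le> j" unfolding al_def by (auto split: if_splits)
    then have "be j < n - r" unfolding be_def using j0_bounds j rn by auto
    then show False using Gs_neE h by auto
  qed
  show ?thesis unfolding biflat_def P_def
    using Fs_flat Gs_flat Fs_ne Gs_ne ar br un nb by auto
qed

lemma P_compat: assumes j: "j \<in> {1..n-1}" and j': "j' \<in> {1..n-1}" shows "compatible (P j) (P j')"
proof (cases "j \<le> j'")
  case True
  then show ?thesis unfolding compatible_def P_def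
    using Fs_mono[OF al_mono[OF True]] Gs_mono[OF be_mono[OF True]] al_range[OF j'] be_range[OF j] by auto
next
  case False
  then have F: "j' \<le> j" by simp
  then show ?thesis unfolding compatible_def P_def
    using Fs_mono[OF al_mono[OF F]] Gs_mono[OF be_mono[OF F]] al_range[OF j] be_range[OF j'] by auto
qed

lemma P_union: "(\<Union>(F, G)\<in>P ` {1..n-1}. F \<inter> G) \<noteq> E"
proof -
  have sub: "(\<Union>(F, G)\<in>P ` {1..n-1}. F \<inter> G) \<subseteq> Fs (j0 - 1) \<union> clD T"
  proof (rule UN_least)
    fix p assume "p \<in> P ` {1..n-1}"
    then obtain j where j: "j \<in> {1..n-1}" "p = P j" by auto
    show "(case p of (F, G) \<Rightarrow> F \<inter> G) \<subseteq> Fs (j0 - 1) \<union> clD T"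
    proof (cases "j < j0")
      case True
      then have "al j \<le> j0 - 1" unfolding al_def using j0_bounds by auto
      then have "Fs (al j) \<subseteq> Fs (j0 - 1)" using Fs_mono j0_bounds by auto
      then show ?thesis using j unfolding P_def by auto
    next
      case False
      then have "be j \<le> n - r - 1" unfolding be_def by auto
      then have "Gs (be j) \<subseteq> clD T" using Gs_mono[of "be j" "n - r - 1"] Gs_T by auto
      then show ?thesis using j unfolding P_def by auto
    qed
  qed
  have "Fs (j0 - 1) = clM (S \<union> c ` {1..i0 - 1})" using Fs_ge[of "j0 - 1"] j0_bounds i0(1)
    unfolding j0_def by (simp add: diff_diff_left)
  then have "a \<notin> Fs (j0 - 1)" using ai0_notin[of "i0 - 1"] i0(1) by auto
  moreover have "a \<notin> clD T" using CD a_in aB BE by auto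
  moreover have "a \<in> E" using aB BE by auto
  ultimately show ?thesis using sub by auto
qed

lemma a_out: "a \<notin> Fs (j0 - 1)" "a \<notin> clD T" "a \<in> E"
proof -
  have "Fs (j0 - 1) = clM (S \<union> c ` {1..i0 - 1})" using Fs_ge[of "j0 - 1"] j0_bounds i0(1)
    unfolding j0_def by (simp add: diff_diff_left)
  then show "a \<notin> Fs (j0 - 1)" using ai0_notin[of "i0 - 1"] i0(1) by auto
  show "a \<notin> clD T" using CD a_in aB BE by auto
  show "a \<in> E" using aB BE by auto
qed

lemma P_biflag: "biflag E indep (P ` {1..n-1})"
  unfolding biflag_def using P_biflat P_compat P_union by auto

lemma flat_rk: assumes "flat E indep F" "F \<noteq> {}" shows "1 \<le> rk indep F" "rk indep F \<le> r + 1"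
proof -
  obtain x where x: "x \<in> F" using assms by auto
  have FE: "F \<subseteq> E" using assms unfolding flat_def by auto
  have "rk indep {x} \<le> rk indep F" using x by (intro matr.rk_mono[OF Mm]) auto
  then show "1 \<le> rk indep F" using matr.rk_ind[OF Mm ind_single[of x]] x FE by auto
  show "rk indep F \<le> r + 1" using matr.rk_mono[OF Mm FE] rank by simp
qed

lemma dflat_rk: assumes "dual_flat E indep G" "G \<noteq> {}" shows "1 \<le> rk dind G" "rk dind G \<le> n - r"
proof -
  obtain x where x: "x \<in> G" using assms by auto
  have GE: "G \<subseteq> E" using assms unfolding dual_flat_def flat_def by auto
  have "rk dind {x} \<le> rk dind G" using x by (intro matr.rk_mono[OF Dm]) auto
  then show "1 \<le> rk dind G" using matr.rk_ind[OF Dm dind_single[of x]] x GE by auto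
  show "rk dind G \<le> n - r" using matr.rk_mono[OF Dm GE] dual_rkE by simp
qed

lemma F_is: assumes F: "flat E indep F" "F \<noteq> {}" and cp: "\<forall>j\<in>{1..n-1}. compatible (F, G) (P j)"
  shows "F = Fs (rk indep F)"
proof -
  note R = flat_rk[OF F]
  let ?A = "rk indep F"
  show ?thesis
  proof (cases "?A = r + 1")
    case True
    have "F \<subseteq> Fs (r + 1)" using Fs_top F unfolding flat_def by auto
    then show ?thesis using matr.flat_eq[OF Mm F(1) Fs_flat[of "r+1"]] Fs_rk[of "r+1"] True by simp
  next
    case False
    then have A: "?A \<le> r" using R by simp
    then have "?A \<in> {1..n-1}" using R rn by auto
    then have "compatible (F, G) (P ?A)" using cp by auto
    then have "F \<subseteq> Fs ?A \<or> Fs ?A \<subseteq> F" unfolding compatible_def P_def al_def using A by auto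
    then show ?thesis
    proof
      assume "F \<subseteq> Fs ?A"
      then show ?thesis using matr.flat_eq[OF Mm F(1) Fs_flat] Fs_rk A by simp
    next
      assume "Fs ?A \<subseteq> F"
      then show ?thesis using matr.flat_eq[OF Mm Fs_flat F(1)] Fs_rk A by simp
    qed
  qed
qed

lemma G_is: assumes G: "dual_flat E indep G" "G \<noteq> {}" and cp: "\<forall>j\<in>{1..n-1}. compatible (F, G) (P j)"
  shows "G = Gs (rk dind G)"
proof -
  note R = dflat_rk[OF G]
  have G1: "flat E dind G" using G unfolding dual_flat_def by simp
  have Gf: "y \<le> n - r \<Longrightarrow> flat E dind (Gs y)" for y using Gs_flat[of y] unfolding dual_flat_def by simp
  let ?B = "rk dind G"
  show ?thesis
  proof (cases "?B = n - r")
    case True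
    have "G \<subseteq> Gs (n - r)" using Gs_top G1 unfolding flat_def by auto
    then show ?thesis using matr.flat_eq[OF Dm G1 Gf[of "n-r"]] Gs_rk[of "n-r"] True by simp
  next
    case False
    then have Bl: "?B < n - r" using R by simp
    let ?j = "n - ?B"
    have j: "?j \<in> {1..n-1}" using R Bl by auto
    have "al ?j = r + 1" unfolding al_def using Bl by auto
    moreover have "be ?j = ?B" unfolding be_def using Bl j0_bounds by auto
    ultimately have "P ?j = (Fs (r+1), Gs ?B)" unfolding P_def by simp
    moreover have "compatible (F, G) (P ?j)" using cp j by blast
    ultimately have "compatible (F, G) (Fs (r+1), Gs ?B)" by simp
    then have "G \<subseteq> Gs ?B \<or> Gs ?B \<subseteq> G" unfolding compatible_def by auto
    then show ?thesis
    proof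
      assume "G \<subseteq> Gs ?B"
      then show ?thesis using matr.flat_eq[OF Dm G1 Gf] Gs_rk Bl by simp
    next
      assume "Gs ?B \<subseteq> G"
      then show ?thesis using matr.flat_eq[OF Dm Gf G1] Gs_rk Bl by simp
    qed
  qed
qed

lemma cmp: assumes A: "A \<le> r + 1" and B: "Bd \<le> n - r" and j: "j \<in> {1..n-1}"
  and c: "compatible (Fs A, Gs Bd) (P j)"
  shows "(A \<le> al j \<and> be j \<le> Bd) \<or> (al j \<le> A \<and> Bd \<le> be j)"
proof -
  have a1: "al j \<le> r + 1" using al_range[OF j] by simp
  have b1: "be j \<le> n - r" using be_range[OF j] by simp
  have "(Fs A \<subseteq> Fs (al j) \<and> Gs (be j) \<subseteq> Gs Bd) \<or> (Fs (al j) \<subseteq> Fs A \<and> Gs Bd \<subseteq> Gs (be j))"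
    using c unfolding compatible_def P_def by simp
  then show ?thesis
  proof
    assume h: "Fs A \<subseteq> Fs (al j) \<and> Gs (be j) \<subseteq> Gs Bd"
    have "A \<le> al j" using Fs_ord[OF A a1] h by simp
    moreover have "be j \<le> Bd" using Gs_ord[OF b1 B] h by simp
    ultimately show ?thesis by simp
  next
    assume h: "Fs (al j) \<subseteq> Fs A \<and> Gs Bd \<subseteq> Gs (be j)"
    have "al j \<le> A" using Fs_ord[OF a1 A] h by simp
    moreover have "Bd \<le> be j" using Gs_ord[OF B b1] h by simp
    ultimately show ?thesis by simp
  qed
qed

lemma P_max: "maximal_biflag E indep (P ` {1..n-1})"
  unfolding maximal_biflag_def
proof (intro conjI allI impI P_biflag)
  fix Y assume Y: "biflag E indep Y \<and> P ` {1..n-1} \<subseteq> Y"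
  have bfY: "\<forall>p\<in>Y. biflat E indep p" and cpY: "\<forall>p\<in>Y. \<forall>q\<in>Y. compatible p q"
    and unY: "(\<Union>(F, G)\<in>Y. F \<inter> G) \<noteq> E" using Y unfolding biflag_def by auto
  have PY: "P j \<in> Y" if "j \<in> {1..n-1}" for j using Y that by auto
  have "Y \<subseteq> P ` {1..n-1}"
  proof
    fix p assume pY: "p \<in> Y"
    obtain F G where p: "p = (F, G)" by (cases p)
    have bf: "biflat E indep (F, G)" using bfY pY p by auto
    have cp: "\<forall>j\<in>{1..n-1}. compatible (F, G) (P j)" using cpY pY p PY by auto
    have Ff: "flat E indep F" "F \<noteq> {}" and Gf: "dual_flat E indep G" "G \<noteq> {}"
      and un: "F \<union> G = E" and nb: "\<not> (F = E \<and> G = E)" using bf unfolding biflat_def by auto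
    define A where "A = rk indep F"
    define Bd where "Bd = rk dind G"
    have FA: "F = Fs A" unfolding A_def using F_is[OF Ff cp] .
    have GB: "G = Gs Bd" unfolding Bd_def using G_is[OF Gf cp] .
    have Ar: "1 \<le> A" "A \<le> r + 1" unfolding A_def using flat_rk[OF Ff] by auto
    have Br: "1 \<le> Bd" "Bd \<le> n - r" unfolding Bd_def using dflat_rk[OF Gf] by auto
    have cp2: "\<And>j. j \<in> {1..n-1} \<Longrightarrow> (A \<le> al j \<and> be j \<le> Bd) \<or> (al j \<le> A \<and> Bd \<le> be j)"
      using cmp[OF Ar(2) Br(2)] cp FA GB by auto
    have goal: "\<exists>j\<in>{1..n-1}. al j = A \<and> be j = Bd"
    proof (cases "Bd = n - r")
      case Btop: True
      have Ar': "A \<le> r"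
      proof (rule ccontr)
        assume "\<not> A \<le> r"
        then have "A = r + 1" using Ar by simp
        then show False using nb FA GB Fs_top Gs_top Btop by simp
      qed
      show ?thesis
      proof (cases "A < j0")
        case True
        then have "al A = A" "be A = Bd" unfolding al_def be_def using Ar' Btop by auto
        moreover have "A \<in> {1..n-1}" using Ar Ar' rn by auto
        ultimately show ?thesis by blast
      next
        case False
        then have "i0 \<le> k" using Ar' unfolding j0_def using kr by auto
        then have r1: "r + 1 \<in> {1..n-1}" using T_ne by auto
        have "al (r+1) = r + 1" "be (r+1) = n - r - 1" unfolding al_def be_def using j0_bounds by auto
        then have y1: "(E, clD T) \<in> Y" using PY[OF r1] Fs_top Gs_T unfolding P_def by simp
        have y2: "(Fs A, E) \<in> Y" using pY p FA GB Btop Gs_top by simp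
        have u1: "E \<inter> clD T \<subseteq> (\<Union>(F, G)\<in>Y. F \<inter> G)"
          using UN_upper[OF y1, of "\<lambda>(F, G). F \<inter> G"] by simp
        have u2: "Fs A \<inter> E \<subseteq> (\<Union>(F, G)\<in>Y. F \<inter> G)"
          using UN_upper[OF y2, of "\<lambda>(F, G). F \<inter> G"] by simp
        have "clD T \<subseteq> E" "Fs A \<subseteq> E" using matr.cl_sub[OF Dm] matr.cl_sub[OF Mm] unfolding Fs_def by auto
        then have "clD T \<union> Fs A \<subseteq> (\<Union>(F, G)\<in>Y. F \<inter> G)" using u1 u2 by blast
        moreover have "Fs j0 \<subseteq> Fs A" using False Fs_mono Ar by auto
        moreover have "Fs j0 = clM (S \<union> c ` {1..i0})" using Fs_ge[of j0] j0_bounds unfolding j0_def by simp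
        ultimately have "clM (S \<union> c ` {1..i0}) \<union> clD T \<subseteq> (\<Union>(F, G)\<in>Y. F \<inter> G)"
          by (metis (no_types, lifting) Un_least le_supE subset_trans)
        then have "E \<subseteq> (\<Union>(F, G)\<in>Y. F \<inter> G)" by (simp only: part1_b)
        moreover have "(\<Union>(F, G)\<in>Y. F \<inter> G) \<subseteq> E" using bfY unfolding biflat_def by fastforce
        ultimately show ?thesis using unY by auto
      qed
    next
      case Bl: False
      then have Bl': "Bd \<le> n - r - 1" using Br by simp
      show ?thesis
      proof (cases "A = r + 1")
        case True
        let ?j = "n - Bd"
        have j: "?j \<in> {1..n-1}" using Br Bl by auto
        have "al ?j = A" unfolding al_def using Bl' True Br by auto
        moreover have "be ?j = Bd" unfolding be_def using Bl' j0_bounds Br by auto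
        ultimately show ?thesis using j by blast
      next
        case False
        then have Ar': "A \<le> r" using Ar by simp
        have nr: "1 \<le> n - r - 1" using Bl' Br by simp
        show ?thesis
        proof (cases "j0 \<le> A")
          case True
          have r1: "r + 1 \<in> {1..n-1}" using nr by auto
          have "al (r+1) = r + 1" "be (r+1) = n - r - 1" unfolding al_def be_def using j0_bounds by auto
          then have "Bd = n - r - 1" using cp2[OF r1] Ar' Bl' by auto
          moreover have "al A = A" "be A = n - r - 1" unfolding al_def be_def using True Ar' by auto
          moreover have "A \<in> {1..n-1}" using Ar Ar' rn by auto
          ultimately show ?thesis by metis
        next
          case False
          have jj: "j0 \<in> {1..n-1}" using j0_bounds nr by auto
          have "al j0 = j0" "be j0 = n - r - 1" unfolding al_def be_def using j0_bounds by auto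
          then have Bd: "Bd = n - r - 1" using cp2[OF jj] False Bl' by auto
          have "Fs A \<subseteq> Fs (j0 - 1)" using Fs_mono[of A "j0 - 1"] False j0_bounds by auto
          then have "a \<notin> F \<union> G" using a_out FA GB Bd Gs_T by auto
          then show ?thesis using un a_out by auto
        qed
      qed
    qed
    then show "p \<in> P ` {1..n-1}" using p FA GB unfolding P_def by auto
  qed
  then show "Y = P ` {1..n-1}" using Y by auto
qed

lemma part2: "inj_on FGs {1..n-1} \<and> maximal_biflag E indep (FGs ` {1..n-1})"
proof -
  have "FGs ` {1..n-1} = P ` {1..n-1}" using FG_eq by (intro image_cong) auto
  moreover have "inj_on FGs {1..n-1}" using P_inj FG_eq unfolding inj_on_def by auto
  ultimately show ?thesis using P_max by simp
qed

end

lemma (in mt) FGs_lam: "FGs = (\<lambda>j. if j \<le> r - k then (clM (e ` {1..j}), E)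
                 else if j - (r - k) \<le> i0 - 1 then (clM (S \<union> c ` {1..j - (r - k)}), E)
                 else if j \<le> r then (clM (S \<union> c ` {1..j - (r - k)}), clD T)
                 else (E, clD (e ` {j - k..n - k - 1})))"
  by (rule ext) (simp add: FGs_def)

theorem mainTheorem5:
  fixes n r k :: nat and indep :: "nat set \<Rightarrow> bool" and B :: "nat set"
    and c e :: "nat \<Rightarrow> nat"
  assumes M: "matroid {0..n} indep"
    and no_loops: "\<forall>x\<in>{0..n}. \<not> loop {0..n} indep x"
    and no_coloops: "\<forall>x\<in>{0..n}. \<not> coloop {0..n} indep x"
    and rank: "rk indep {0..n} = r + 1"
    and nbc: "nbc_basis {0..n} indep B"
    and c_img: "IA {0..n} indep B = c ` {1..k+1}"
    and c_dec: "\<forall>a\<in>{1..k+1}. \<forall>b\<in>{1..k+1}. a < b \<longrightarrow> c b < c a"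
    and S_img: "B - IA {0..n} indep B = e ` {1..r-k}"
    and S_dec: "\<forall>a\<in>{1..r-k}. \<forall>b\<in>{1..r-k}. a < b \<longrightarrow> e b < e a"
    and T_img: "({0..n} - B) - {Min ({0..n} - B)} = e ` {r-k+1..n-k-1}"
    and T_inc: "\<forall>a\<in>{r-k+1..n-k-1}. \<forall>b\<in>{r-k+1..n-k-1}. a < b \<longrightarrow> e a < e b"
  shows
    "let E = {0..n};
         S = B - IA E indep B;
         T = (E - B) - {Min (E - B)};
         clM = cl E indep;
         clD = dual_cl E indep
     in \<exists>i\<in>{1..k+1}.
          \<comment> \<open>(1) i is the largest index with c_i not in cl(S) \<union> cl^perp(T) ...\<close>
          c i \<notin> clM S \<union> clD T \<and>
          (\<forall>j\<in>{1..k+1}. c j \<notin> clM S \<union> clD T \<longrightarrow> j \<le> i) \<and>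
          \<comment> \<open>... and the smallest index with cl(S \<union> {c_1..c_i}) \<union> cl^perp(T) = E\<close>
          clM (S \<union> c ` {1..i}) \<union> clD T = E \<and>
          (\<forall>j\<in>{1..<i}. clM (S \<union> c ` {1..j}) \<union> clD T \<noteq> E) \<and>
          \<comment> \<open>(2) the n-1 pairs F^+_j | G^+_j form a maximal biflag\<close>
          (let FG = (\<lambda>j.
                 if j \<le> r - k then (clM (e ` {1..j}), E)
                 else if j - (r - k) \<le> i - 1 then (clM (S \<union> c ` {1..j - (r - k)}), E)
                 else if j \<le> r then (clM (S \<union> c ` {1..j - (r - k)}), clD T)
                 else (E, clD (e ` {j - k..n - k - 1})))
           in inj_on FG {1..n-1} \<and> maximal_biflag E indep (FG ` {1..n-1}))"
  proof -
  interpret X: mt n r k indep B c e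
    by (unfold_locales; fact)
  show ?thesis
    unfolding Let_def dual_cl_def
    using X.part1 X.part2 X.i0(1) unfolding X.FGs_lam X.S_def X.T_def X.m_def by blast
qed

end
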